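(* There is an absolute constant $c_0>0$ such that the following holds. Let $d\in\mathbb N_+$ and $0<\varepsilon\le c_0$. Let $Y=X+Z$ where $X\sim\mathrm{Bin}(d-1,1/2)$ and $Z\sim\mathrm{DLap}(1/\varepsilon)$ are independent. Then $$\Pr\left[Y=\left\lceil\frac{d-1}2\right\rceil\right]\ \ge\ \Omega\left(\frac1{\sqrt{d+1/\varepsilon^2}}\right),$$ with an absolute hidden constant.
   Context: $\mathrm{DLap}(1/\varepsilon)$ denotes the discrete Laplace distribution on $\mathbb Z$ with probability mass $\frac{e^\varepsilon-1}{e^\varepsilon+1}e^{-\varepsilon|x|}$ at $x\in\mathbb Z$. *)

theory Defs
  imports "HOL-Probability.Probability"
begin

text \<open>Probability mass of the discrete Laplace distribution DLap(1/eps) at an integer z.\<close>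
definition dlap :: "real \<Rightarrow> int \<Rightarrow> real" where
  "dlap eps z = (exp eps - 1) / (exp eps + 1) * exp (- eps * real_of_int \<bar>z\<bar>)"

text \<open>Pr[X + Z = y] for independent X ~ Bin(n, 1/2) and Z ~ DLap(1/eps):
  the convolution of the two probability mass functions.\<close>
definition binlap_prob :: "nat \<Rightarrow> real \<Rightarrow> int \<Rightarrow> real" where
  "binlap_prob n eps y =
     (\<Sum>k\<le>n. pmf (binomial_pmf n (1/2)) k * dlap eps (y - int k))"

end

theory Submission
  imports Defs
begin

lemma choose_ratio:
  "real (n choose Suc k) * real (Suc k) = real (n choose k) * real (n - k)"
proof (cases n)
  case 0 then show ?thesis by simp
next
  case (Suc n')
  have "Suc k * (Suc n' choose Suc k) = Suc n' * (n' choose k)" by (rule Suc_times_binomial)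
  moreover have "(Suc n' - k) * (Suc n' choose k) = Suc n' * ((Suc n' - 1) choose k)" by (rule binomial_absorb_comp)
  ultimately have "(n choose Suc k) * Suc k = (n choose k) * (n - k)" using Suc by (simp add: mult.commute)
  then show ?thesis by (metis of_nat_mult)
qed

lemma choose_decay:
  assumes m1: "1 \<le> m" and h1: "n \<le> 2*m" and h2: "2*m \<le> n+1"
  shows "m + j \<le> n \<Longrightarrow> real (n choose m) * (1 - real j * (real j + 1) / real m) \<le> real (n choose (m+j))"
proof (induction j)
  case 0 then show ?case by simp
next
  case (Suc j)
  define A where "A = real j * (real j + 1) / real m"
  define B where "B = (2 * real j + 2) / real m"
  have mpos: "real m > 0" using m1 by simp
  have IH: "real (n choose m) * (1 - A) \<le> real (n choose (m+j))" using Suc by (simp add: A_def)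
  have AB: "A + B = real (Suc j) * (real (Suc j) + 1) / real m"
    unfolding A_def B_def using mpos by (simp add: field_simps)
  show ?case
  proof (cases "1 - (A + B) \<le> 0")
    case True
    have "real (n choose m) * (1 - (A+B)) \<le> 0" using True by (simp add: mult_nonneg_nonpos)
    then show ?thesis using AB by (metis of_nat_0_le_iff order_trans)
  next
    case False
    have A0: "A \<ge> 0" "B \<ge> 0" unfolding A_def B_def using mpos by auto
    define f where "f = real (n - (m+j)) / real (m + j + 1)"
    have rat: "real (n choose (m+j+1)) = real (n choose (m+j)) * f"
      using choose_ratio[of n "m+j"] unfolding f_def by (simp add: field_simps)
    have nmj: "real (n - (m+j)) = real n - real m - real j" using Suc.prems by auto
    have "1 - B \<le> f"
    proof -
      have "(1 - B) * real (m+j+1) \<le> real (n - (m+j))"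
      proof -
        have "(1 - B) * real (m+j+1) = real (m+j+1) - (2 * real j + 2) * real (m+j+1) / real m"
          unfolding B_def by (simp add: algebra_simps)
        also have "\<dots> \<le> real (m+j+1) - (2 * real j + 2)"
        proof -
          have "(2 * real j + 2) * real m \<le> (2 * real j + 2) * real (m+j+1)" by (intro mult_left_mono) auto
          then have "(2 * real j + 2) \<le> (2 * real j + 2) * real (m+j+1) / real m" using mpos by (simp add: field_simps)
          then show ?thesis by linarith
        qed
        also have "\<dots> \<le> real (n - (m+j))" using nmj h2 by (simp add: of_nat_diff)
        finally show ?thesis .
      qed
      then show ?thesis unfolding f_def by (simp add: field_simps)
    qed
    have B1: "1 - B \<ge> 0" using False A0 by linarith
    have A1: "1 - A \<ge> 0" using False A0 by linarith
    have "real (n choose m) * (1 - (A+B)) \<le> real (n choose m) * ((1 - A) * (1 - B))"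
      using A0 by (intro mult_left_mono) (auto simp: algebra_simps)
    also have "\<dots> = (real (n choose m) * (1 - A)) * (1 - B)" by simp
    also have "\<dots> \<le> real (n choose (m+j)) * (1 - B)" using IH B1 by (rule mult_right_mono)
    also have "\<dots> \<le> real (n choose (m+j)) * f" using \<open>1 - B \<le> f\<close> by (intro mult_left_mono) auto
    also have "\<dots> = real (n choose (m + Suc j))" using rat by simp
    finally show ?thesis using AB by simp
  qed
qed

lemma central_step: "real ((2 * Suc k) choose (Suc k)) * (real k + 1) = 2 * (2 * real k + 1) * real ((2*k) choose k)"
proof -
  have e1: "Suc (2*k+1) * ((2*k+1) choose k) = (Suc (2*k+1) choose Suc k) * Suc k"
    by (rule Suc_times_binomial_eq)
  have e2: "Suc (2*k) * ((2*k) choose k) = (Suc (2*k) choose Suc k) * Suc k"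
    by (rule Suc_times_binomial_eq)
  have e3: "(2*k+1) choose k = (2*k+1) choose (k+1)"
    using binomial_symmetric[of k "2*k+1"] by simp
  define a where "a = real ((2*k+2) choose (k+1))"
  define b where "b = real ((2*k+1) choose k)"
  define c where "c = real ((2*k) choose k)"
  have r1: "(2 * real k + 2) * b = a * (real k + 1)"
    using arg_cong[OF e1, of real] unfolding a_def b_def by (simp add: algebra_simps)
  have r2: "(2 * real k + 1) * c = b * (real k + 1)"
    using arg_cong[OF e2, of real] e3 unfolding b_def c_def by (simp add: algebra_simps)
  have "a * (real k + 1) * (real k + 1) = (2 * real k + 2) * (b * (real k + 1))"
    using r1 by (simp add: algebra_simps)
  also have "\<dots> = (2 * real k + 2) * ((2 * real k + 1) * c)"
    using r2 by simp
  also have "\<dots> = (2 * (2 * real k + 1) * c) * (real k + 1)"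
    by (simp add: algebra_simps)
  finally have "a * (real k + 1) = 2 * (2 * real k + 1) * c"
    by (simp add: add_pos_nonneg)
  moreover have "2 * Suc k = 2*k+2" "Suc k = k+1" by simp_all
  ultimately show ?thesis unfolding a_def c_def by (simp only:)
qed

lemma central_lower: "16^k \<le> (4*real k + 1) * real ((2*k) choose k)^2"
proof (induction k)
  case 0 then show ?case by simp
next
  case (Suc k)
  define x where "x = real ((2*k) choose k)"
  define y where "y = real ((2*(Suc k)) choose (Suc k))"
  have yx: "y * (real k + 1) = 2 * (2 * real k + 1) * x"
    using central_step[of k] unfolding x_def y_def .
  have IH: "16^k \<le> (4*real k + 1) * x^2" using Suc x_def by simp
  have y2: "y^2 * (real k + 1)^2 = 4 * (2 * real k + 1)^2 * x^2"
  proof -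
    have "y^2 * (real k + 1)^2 = (y * (real k + 1))^2" by (simp add: power_mult_distrib)
    also have "\<dots> = (2 * (2 * real k + 1) * x)^2" using yx by simp
    also have "\<dots> = 4 * (2 * real k + 1)^2 * x^2" by (simp add: power2_eq_square algebra_simps)
    finally show ?thesis .
  qed
  have poly: "4 * (real k + 1)^2 * (4 * real k + 1) \<le> (4 * real k + 5) * (2 * real k + 1)^2"
    by (simp add: power2_eq_square algebra_simps)
  have "16^(Suc k) * (real k + 1)^2 * (4 * real k + 1) = 16 * (real k + 1)^2 * (16^k * (4 * real k + 1))"
    by simp
  also have "\<dots> \<le> 16 * (real k + 1)^2 * ((4*real k + 1) * x^2 * (4 * real k + 1))"
    using IH by (intro mult_left_mono mult_right_mono) auto
  also have "\<dots> = 4 * (4 * (real k + 1)^2 * (4 * real k + 1)) * (4 * real k + 1) * x^2" by (simp add: algebra_simps)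
  also have "\<dots> \<le> 4 * ((4 * real k + 5) * (2 * real k + 1)^2) * (4 * real k + 1) * x^2"
    using poly by (intro mult_right_mono mult_left_mono) auto
  also have "\<dots> = (4 * real (Suc k) + 1) * y^2 * (real k + 1)^2 * (4 * real k + 1)"
    using y2 by (simp add: algebra_simps)
  finally have "16^(Suc k) * ((real k + 1)^2 * (4 * real k + 1)) \<le> (4 * real (Suc k) + 1) * y^2 * ((real k + 1)^2 * (4 * real k + 1))"
    by (simp add: algebra_simps)
  moreover have "(real k + 1)^2 * (4 * real k + 1) > 0" by simp
  ultimately show ?case unfolding y_def by (simp add: mult_le_cancel_right)
qed

lemma bm_lower:
  fixes n :: nat
  shows "1 \<le> (real (n choose (n - n div 2)) / 2^n)^2 * (4 * real (n+1))"
proof -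
  define k where "k = n div 2"
  have k: "n = 2*k \<or> n = 2*k+1" unfolding k_def by presburger
  then show ?thesis
  proof
    assume n: "n = 2*k"
    define c where "c = real (n choose k)"
    have h: "16^k \<le> (4*real k + 1) * c^2" unfolding c_def n by (rule central_lower)
    have p: "(2::real)^n = 4^k" using n by (simp add: power_mult)
    have q: "n - n div 2 = k" using n by simp
    have r: "((4::real)^k)^2 = 16^k" by (simp add: power_mult_distrib[symmetric] power2_eq_square)
    have "(4*real k + 1) * c^2 \<le> 4 * real (n+1) * c^2" using n by (intro mult_right_mono) auto
    with h have "16^k \<le> 4 * real (n+1) * c^2" by linarith
    then have "1 \<le> 4 * real (n+1) * c^2 / 16^k" by simp
    then show ?thesis using p q r unfolding c_def by (simp add: power_divide field_simps)
  next
    assume n: "n = 2*k+1"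
    define c where "c = real (n choose (k+1))"
    have h0: "16^(k+1) \<le> (4*real (k+1) + 1) * real ((2*(k+1)) choose (k+1))^2" by (rule central_lower)
    have e: "(2*(k+1)) choose (k+1) = 2 * ((2*k+1) choose (k+1))"
      using binomial_Suc_Suc[of "2*k+1" k] binomial_symmetric[of k "2*k+1"] by simp
    have e2: "real ((2*(k+1)) choose (k+1)) = 2 * c" unfolding e c_def n by (simp only: of_nat_mult of_nat_numeral)
    have h: "16^(k+1) \<le> (4*real (k+1) + 1) * (4 * c^2)" using h0 unfolding e2 by (simp add: power2_eq_square)
    have p: "(2::real)^n = 2 * 4^k" using n by (simp add: power_mult)
    have q: "n - n div 2 = k+1" using n by simp
    have r: "(2 * (4::real)^k)^2 = 16^(k+1) / 4" by (simp add: power_mult_distrib[symmetric] power2_eq_square)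
    have "(4*real (k+1) + 1) * (4 * c^2) \<le> (4 * real (n+1)) * (4 * c^2)" using n by (intro mult_right_mono) auto
    then have "(4*real (k+1) + 1) * (4 * c^2) \<le> 4 * (4 * real (n+1) * c^2)" by simp
    with h have "16^(k+1) / 4 \<le> 4 * real (n+1) * c^2" by linarith
    then have "1 \<le> 4 * real (n+1) * c^2 / (16^(k+1) / 4)" by simp
    then show ?thesis using p q r unfolding c_def by (simp add: power_divide field_simps)
  qed
qed

lemma dlap_nonneg: "0 < eps \<Longrightarrow> 0 \<le> dlap eps z"
  unfolding dlap_def by (intro mult_nonneg_nonneg divide_nonneg_nonneg) (auto simp: add_pos_pos)

lemma main_bound:
  fixes d :: nat and eps :: real
  assumes d1: "d \<ge> 1" and e0: "0 < eps" and e1: "eps \<le> 1"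
  shows "1/1000 / sqrt (real d + 1 / eps^2) \<le> binlap_prob (d - 1) eps \<lceil>real (d - 1) / 2\<rceil>"
proof -
  define n where "n = d - 1"
  define m where "m = n - n div 2"
  have dn: "real d = real n + 1" using d1 unfolding n_def by simp
  have ceil: "\<lceil>real (d - 1) / 2\<rceil> = int m"
  proof -
    have "2*m = n \<or> 2*m = n+1" unfolding m_def by presburger
    then have "2 * real m = real n \<or> 2 * real m = real n + 1" by (metis of_nat_1 of_nat_add of_nat_mult of_nat_numeral)
    then show ?thesis unfolding n_def[symmetric] by (intro ceiling_unique) auto
  qed
  have mn1: "n \<le> 2*m" "2*m \<le> n+1" "m \<le> n" unfolding m_def by auto
  define b where "b = real (n choose m) / 2^n"
  define T where "T = (exp eps - 1) / (exp eps + 1)"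
  have b0: "b \<ge> 0" unfolding b_def by simp
  have T4: "eps / 4 \<le> T"
  proof -
    have "eps \<le> exp eps - 1" using exp_ge_add_one_self[of eps] by linarith
    moreover have "exp eps \<le> 3" using exp_le exp_mono[OF e1] by linarith
    moreover have "exp eps + 1 > 0" by (smt (verit) exp_gt_zero)
    ultimately have "eps * (exp eps + 1) \<le> (exp eps - 1) * 4"
    proof -
      assume a: "eps \<le> exp eps - 1" "exp eps \<le> 3" "exp eps + 1 > 0"
      have "eps * (exp eps + 1) \<le> (exp eps - 1) * (exp eps + 1)" using a by (intro mult_right_mono) auto
      also have "\<dots> \<le> (exp eps - 1) * 4" using a e0 by (intro mult_left_mono) auto
      finally show ?thesis .
    qed
    then show ?thesis unfolding T_def using \<open>exp eps + 1 > 0\<close> by (simp add: field_simps)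
  qed
  have T0: "T \<ge> 0" using T4 e0 by linarith
  have bsq: "1 \<le> b * (2 * sqrt (real d))"
  proof -
    have "1 \<le> b^2 * (4 * real d)" using bm_lower[of n] dn unfolding b_def m_def by (simp add: add.commute)
    then have "sqrt 1 \<le> sqrt (b^2 * (4 * real d))" by (rule real_sqrt_le_mono)
    also have "sqrt (b^2 * (4 * real d)) = b * (2 * sqrt (real d))"
      using b0 by (simp add: real_sqrt_mult)
    finally show ?thesis by simp
  qed
  define J where "J = nat \<lfloor>min (sqrt (real d) / 8) (1 / eps)\<rfloor>"
  have mpos: "min (sqrt (real d) / 8) (1 / eps) \<ge> 0" using e0 by simp
  have JM: "real J = real_of_int \<lfloor>min (sqrt (real d) / 8) (1 / eps)\<rfloor>"
    unfolding J_def using mpos by (intro of_nat_nat) simp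
  have JM2: "real J \<le> min (sqrt (real d) / 8) (1 / eps)" unfolding JM by (rule of_int_floor_le)
  have J1: "real J \<le> sqrt (real d) / 8" "real J \<le> 1 / eps" using JM2 by auto
  have J2: "min (sqrt (real d) / 8) (1 / eps) \<le> real J + 1"
    unfolding JM by linarith
  have J3: "64 * real J ^ 2 \<le> real d"
  proof -
    have "(8 * real J)^2 \<le> (sqrt (real d))^2" using J1(1) by (intro power_mono) auto
    then show ?thesis by (simp add: power2_eq_square)
  qed
  have epsJ: "eps * real J \<le> 1" using J1(2) e0 by (simp add: field_simps)
  have mJ: "m + J \<le> n"
  proof (cases "J = 0")
    case True then show ?thesis using mn1 by simp
  next
    case False
    then have "real J \<ge> 1" by simp
    then have "real J \<le> real J ^ 2" by (simp add: power2_eq_square)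
    with J3 \<open>real J \<ge> 1\<close> have "real J \<le> real d / 64" "real d \<ge> 64" by linarith+
    then show ?thesis using mn1 dn by linarith
  qed
  have termb: "b * (7/8) * T * exp (-1) \<le> pmf (binomial_pmf n (1/2)) (m+j) * dlap eps (int m - int (m+j))"
    if j: "j \<le> J" for j
  proof -
    have mjn: "m + j \<le> n" using j mJ by simp
    have pm: "pmf (binomial_pmf n (1/2)) (m+j) = real (n choose (m+j)) / 2^n"
      using mjn by (simp add: power_add[symmetric] power_one_over)
    have dl: "dlap eps (int m - int (m+j)) = T * exp (- (eps * real j))"
      unfolding dlap_def T_def by simp
    have ch: "real (n choose m) * (7/8) \<le> real (n choose (m+j))"
    proof (cases "j = 0")
      case True then show ?thesis by simp
    next
      case False
      then have "real j \<ge> 1" by simp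
      have jJ: "real j \<le> real J" using j by simp
      have "real j ^ 2 \<le> real J ^ 2" using jJ by (intro power_mono) auto
      then have "64 * real j ^ 2 \<le> real d" using J3 by linarith
      moreover have "1 \<le> real j ^ 2" using \<open>real j \<ge> 1\<close> by (rule one_le_power)
      ultimately have d64: "real d \<ge> 64" by linarith
      have m1: "1 \<le> m" using d64 mn1 dn by linarith
      have "real m \<ge> real d / 4" using mn1 dn d64 by linarith
      moreover have "real j * (real j + 1) \<le> real d / 32"
      proof -
        have "real j \<le> real j ^ 2" using \<open>real j \<ge> 1\<close> by (simp add: power2_eq_square)
        moreover have "real j * (real j + 1) = real j ^ 2 + real j" by (simp add: power2_eq_square algebra_simps)
        ultimately show ?thesis using \<open>64 * real j ^ 2 \<le> real d\<close> by linarith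
      qed
      ultimately have "real j * (real j + 1) \<le> real m / 8" by linarith
      then have "real j * (real j + 1) / real m \<le> 1/8"
        using m1 by (simp add: pos_divide_le_eq)
      then have "real (n choose m) * (7/8) \<le> real (n choose m) * (1 - real j * (real j + 1) / real m)"
        by (intro mult_left_mono) auto
      also have "\<dots> \<le> real (n choose (m+j))" using choose_decay[OF m1 mn1(1,2) mjn] .
      finally show ?thesis .
    qed
    have ex: "exp (-1) \<le> exp (- (eps * real j))"
      using epsJ j e0 by (simp add: mult_left_mono order_trans) (smt (verit) mult_left_mono of_nat_le_iff)
    have "b * (7/8) = real (n choose m) * (7/8) / 2^n" unfolding b_def by simp
    also have "\<dots> \<le> real (n choose (m+j)) / 2^n" using ch by (intro divide_right_mono) auto
    finally have bb: "b * (7/8) \<le> real (n choose (m+j)) / 2^n" .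
    have "b * (7/8) * T * exp (-1) \<le> real (n choose (m+j)) / 2^n * T * exp (- (eps * real j))"
      using bb ex T0 b0 by (intro mult_mono) auto
    then show ?thesis using pm dl by simp
  qed
  have "real (J+1) * (b * (7/8) * T * exp (-1)) = (\<Sum>j\<le>J. b * (7/8) * T * exp (-1))" by simp
  also have "\<dots> \<le> (\<Sum>j\<le>J. pmf (binomial_pmf n (1/2)) (m+j) * dlap eps (int m - int (m+j)))"
    using termb by (intro sum_mono) auto
  also have "\<dots> = (\<Sum>k\<in>(\<lambda>j. m+j) ` {..J}. pmf (binomial_pmf n (1/2)) k * dlap eps (int m - int k))"
    by (subst sum.reindex) (auto simp: inj_on_def)
  also have "\<dots> \<le> (\<Sum>k\<le>n. pmf (binomial_pmf n (1/2)) k * dlap eps (int m - int k))"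
    using mJ dlap_nonneg[OF e0] by (intro sum_mono2) (auto intro!: mult_nonneg_nonneg)
  also have "\<dots> = binlap_prob (d - 1) eps \<lceil>real (d - 1) / 2\<rceil>"
    unfolding binlap_prob_def ceil n_def ..
  finally have main: "real (J+1) * (b * (7/8) * T * exp (-1)) \<le> binlap_prob (d - 1) eps \<lceil>real (d - 1) / 2\<rceil>" .
  have e3: "exp (-1) \<ge> (1/3::real)"
    using exp_le by (simp add: exp_minus field_simps)
  have low: "real (J+1) * b * eps * (7/96) \<le> real (J+1) * (b * (7/8) * T * exp (-1))"
  proof -
    have "b * eps * (7/96) = b * (7/8) * (eps/4) * (1/3)" by simp
    also have "\<dots> \<le> b * (7/8) * T * exp (-1)" using T4 e3 b0 e0 by (intro mult_mono) auto
    finally have "b * eps * (7/96) \<le> b * (7/8) * T * exp (-1)" .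
    then have "real (J+1) * (b * eps * (7/96)) \<le> real (J+1) * (b * (7/8) * T * exp (-1))"
      by (rule mult_left_mono) simp
    then show ?thesis by (simp only: mult.assoc)
  qed
  have sq: "sqrt (real d + 1 / eps^2) \<ge> sqrt (real d)" "sqrt (real d + 1 / eps^2) \<ge> 1 / eps"
  proof -
    show "sqrt (real d + 1 / eps^2) \<ge> sqrt (real d)" by (rule real_sqrt_le_mono) simp
    have "sqrt (1 / eps^2) = 1 / eps" using e0 by (simp add: real_sqrt_divide)
    moreover have "sqrt (1 / eps^2) \<le> sqrt (real d + 1 / eps^2)" by (rule real_sqrt_le_mono) simp
    ultimately show "sqrt (real d + 1 / eps^2) \<ge> 1 / eps" by simp
  qed
  have sd: "sqrt (real d) \<ge> 1" using d1 by simp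
  have goal: "1/1000 / sqrt (real d + 1 / eps^2) \<le> real (J+1) * b * eps * (7/96)"
  proof (cases "1/eps \<le> real J + 1")
    case True
    then have "1 \<le> (real J + 1) * eps" using e0 by (simp add: field_simps)
    then have "b * 1 \<le> b * ((real J + 1) * eps)" using b0 by (intro mult_left_mono) auto
    then have "b \<le> real (J+1) * b * eps" by (simp add: algebra_simps)
    moreover have "1/1000 / sqrt (real d) \<le> b * (7/96)"
      using bsq sd by (simp add: field_simps)
    moreover have "1/1000 / sqrt (real d + 1 / eps^2) \<le> 1/1000 / sqrt (real d)"
    proof -
      have p1: "sqrt (real d + 1 / eps^2) > 0" using sq(1) sd by linarith
      have p2: "sqrt (real d) > 0" using sd by linarith
      show ?thesis using sq(1) p1 p2 by (intro divide_left_mono) auto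
    qed
    ultimately show ?thesis by linarith
  next
    case False
    then have Jd: "sqrt (real d) / 8 \<le> real J + 1" using J2 by linarith
    have "eps / 16 \<le> real (J+1) * b * eps"
    proof -
      have "1 \<le> (sqrt (real d) / 8) * b * 16" using bsq by (simp add: field_simps)
      also have "\<dots> \<le> (real J + 1) * b * 16" using Jd b0 by (intro mult_right_mono) auto
      finally have "1 \<le> (real J + 1) * b * 16" .
      then have "eps * 1 \<le> eps * ((real J + 1) * b * 16)" using e0 by (intro mult_left_mono) auto
      then show ?thesis by (simp add: algebra_simps)
    qed
    moreover have "1/1000 / sqrt (real d + 1 / eps^2) \<le> eps / 1000"
    proof -
      have "1/1000 / sqrt (real d + 1 / eps^2) \<le> 1/1000 / (1/eps)"
      proof -
        have p0: "1 / eps > 0" using e0 by simp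
        then have p1: "sqrt (real d + 1 / eps^2) > 0" using sq(2) by linarith
        show ?thesis using sq(2) p0 p1 by (intro divide_left_mono) auto
      qed
      then show ?thesis by simp
    qed
    ultimately show ?thesis using e0 by linarith
  qed
  show ?thesis
    using goal low main by linarith
qed

theorem lemma5p4:
  "\<exists>c0>0. \<exists>C>0. \<forall>(d::nat) (eps::real). d \<ge> 1 \<longrightarrow> 0 < eps \<longrightarrow> eps \<le> c0 \<longrightarrow>
     binlap_prob (d - 1) eps \<lceil>real (d - 1) / 2\<rceil> \<ge> C / sqrt (real d + 1 / eps\<^sup>2)"
  apply (rule exI[of _ 1], rule conjI, simp)
  apply (rule exI[of _ "1/1000"], rule conjI, simp)
  using main_bound by blast

end
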